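(* In the DS-Sync setting, assume: (i) $F$ is $L$-smooth; (ii) $F$ is $\mu$-strongly convex with minimizer $w^*$; (iii) $\mathbb{E}\,|\nabla F(w_t^k,\xi_t^k)-\nabla F(w_t^k)|^2\le\sigma^2$ for all $t,k$; (iv) $\mathbb{E}\,|\nabla F(w_t^k,\xi_t^k)|^2\le G^2$ for all $t,k$. Let $\kappa=L/\mu$, $\gamma=\max(8\kappa,2)$, and use learning rates $\eta_t=\frac{2}{\mu(\gamma+t)}$. For $t\ge0$ let $\bar w_t=\frac1N\sum_{k\in\mathcal{G}}w_t^k$, where $\mathcal{G}$ is any block of the partition $P_{t\bmod 2}$. Then for all $t\ge0$, $$\mathbb{E}[F(\bar w_t)]-F(w^* )\le\frac{2\kappa}{\gamma+t}\Big(\frac{B}{\mu}+2L\,|w_0-w^*|^2\Big),\qquad\text{where } B=\frac{\sigma^2}{N}+8G^2.$$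
   Context: DS-Sync setting. Let $N\ge1$ be an integer and $W=N^2$ workers indexed by $m\in\{0,\dots,W-1\}$. Two partitions of the workers into $N$ blocks of size $N$: $P_0$ with blocks $\{m:\lfloor m/N\rfloor=a\}$, and $P_1$ with blocks $\{m: m \bmod N=b\}$. For $s\ge0$ let $\mathcal{G}_s(m)$ denote the block of $P_{s \bmod 2}$ containing $m$. $F:\mathbb{R}^d\to\mathbb{R}$ is differentiable with stochastic gradient oracle $\nabla F(w,\xi)$. All workers start at $w_0^m=w_0$. For $t=0,1,2,\dots$, worker $m$ draws $\xi_t^m$, sets $v_{t+1}^m=w_t^m-\eta_t\nabla F(w_t^m,\xi_t^m)$, then $w_{t+1}^m=\frac1N\sum_{j\in\mathcal{G}_t(m)}v_{t+1}^j$. Let $\mathcal{F}_t$ be the $\sigma$-algebra generated by all $\xi_s^m$, $s<t$; conditionally on $\mathcal{F}_t$, the $\xi_t^m$ are independent across $m$, and $\mathbb{E}[\nabla F(w_t^m,\xi_t^m)\mid\mathcal{F}_t]=\nabla F(w_t^m)$. $L$-smooth: $F(v)\le F(w)+(v-w)^T\nabla F(w)+\frac L2|v-w|^2$ for all $v,w$. $\mu$-strongly convex: $F(v)\ge F(w)+(v-w)^T\nabla F(w)+\frac\mu2|v-w|^2$ for all $v,w$. $|\cdot|$ is the Euclidean norm. *)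

theory Defs
  imports "HOL-Probability.Probability"
begin

text \<open>Block of worker m in the partition P_(s mod 2), with W = N^2 workers.\<close>
definition ds_block :: "nat \<Rightarrow> nat \<Rightarrow> nat \<Rightarrow> nat set" where
  "ds_block N s m =
     (if even s then {j. j < N^2 \<and> j div N = m div N}
      else {j. j < N^2 \<and> j mod N = m mod N})"

fun ds_iter :: "nat \<Rightarrow> ('a::real_vector \<Rightarrow> 'b \<Rightarrow> 'a) \<Rightarrow> (nat \<Rightarrow> real) \<Rightarrow> 'a
               \<Rightarrow> (nat \<Rightarrow> nat \<Rightarrow> 'p \<Rightarrow> 'b) \<Rightarrow> nat \<Rightarrow> nat \<Rightarrow> 'p \<Rightarrow> 'a" where
  "ds_iter N g eta w0 xi 0 m \<omega> = w0"
| "ds_iter N g eta w0 xi (Suc t) m \<omega> =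
     (1 / real N) *\<^sub>R (\<Sum>j\<in>ds_block N t m.
        ds_iter N g eta w0 xi t j \<omega> - eta t *\<^sub>R g (ds_iter N g eta w0 xi t j \<omega>) (xi t j \<omega>))"

definition ds_filt :: "'p measure \<Rightarrow> 'b measure \<Rightarrow> nat \<Rightarrow> (nat \<Rightarrow> nat \<Rightarrow> 'p \<Rightarrow> 'b) \<Rightarrow> nat \<Rightarrow> 'p measure" where
  "ds_filt M S N xi t = sigma (space M)
     (\<Union>s<t. \<Union>m<N^2. {xi s m -` A \<inter> space M | A. A \<in> sets S})"

definition cond_indep_vars :: "'p measure \<Rightarrow> 'p measure \<Rightarrow> 'b measure \<Rightarrow> 'i set \<Rightarrow> ('i \<Rightarrow> 'p \<Rightarrow> 'b) \<Rightarrow> bool" where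
  "cond_indep_vars M Fs S I X \<longleftrightarrow>
     (\<forall>A. (\<forall>i\<in>I. A i \<in> sets S) \<longrightarrow>
        (AE \<omega> in M. real_cond_exp M Fs (indicator (\<Inter>i\<in>I. X i -` A i \<inter> space M)) \<omega>
                    = (\<Prod>i\<in>I. real_cond_exp M Fs (indicator (X i -` A i \<inter> space M)) \<omega>)))"

end

theory Submission
  imports Defs
begin


lemma blk_sub: "ds_block N t m \<subseteq> {..<N^2}"
  by (auto simp: ds_block_def)

lemma blk_even: assumes "even t" "m < N^2"
  shows "ds_block N t m = (\<lambda>b. (m div N)*N + b) ` {..<N}"
proof -
  have N: "N > 0" using assms(2) by (cases N) auto
  have md: "m div N < N" using assms(2) N by (simp add: less_mult_imp_div_less power2_eq_square)
  show ?thesis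
  proof (rule set_eqI, rule iffI)
    fix j assume "j \<in> ds_block N t m"
    then have "j div N = m div N" using assms by (auto simp: ds_block_def)
    then show "j \<in> (\<lambda>b. (m div N)*N + b) ` {..<N}"
      by (intro image_eqI[of _ _ "j mod N"]) (auto simp: N, metis div_mult_mod_eq)
  next
    fix j assume "j \<in> (\<lambda>b. (m div N)*N + b) ` {..<N}"
    then obtain b where b: "b < N" "j = (m div N)*N + b" by auto
    have "j div N = m div N" using b N by simp
    moreover have "j < N^2"
    proof -
      have "j < (m div N)*N + N" using b by simp
      also have "\<dots> = (m div N + 1) * N" by simp
      also have "\<dots> \<le> N * N" using md by (intro mult_right_mono) auto
      finally show ?thesis by (simp add: power2_eq_square)
    qed
    ultimately show "j \<in> ds_block N t m" using assms by (auto simp: ds_block_def)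
  qed
qed

lemma blk_odd: assumes "odd t" "m < N^2"
  shows "ds_block N t m = (\<lambda>a. a*N + m mod N) ` {..<N}"
proof -
  have N: "N > 0" using assms(2) by (cases N) auto
  show ?thesis
  proof (rule set_eqI, rule iffI)
    fix j assume "j \<in> ds_block N t m"
    then have "j mod N = m mod N" "j < N^2" using assms by (auto simp: ds_block_def)
    then show "j \<in> (\<lambda>a. a*N + m mod N) ` {..<N}"
      by (intro image_eqI[of _ _ "j div N"]) (auto simp: N power2_eq_square less_mult_imp_div_less, metis div_mult_mod_eq)
  next
    fix j assume "j \<in> (\<lambda>a. a*N + m mod N) ` {..<N}"
    then obtain a where a: "a < N" "j = a*N + m mod N" by auto
    have "j mod N = m mod N" using a N by simp
    moreover have "j < N^2"
    proof -
      have "j < a*N + N" using a N by simp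
      also have "\<dots> = (a + 1) * N" by simp
      also have "\<dots> \<le> N * N" using a by (intro mult_right_mono) auto
      finally show ?thesis by (simp add: power2_eq_square)
    qed
    ultimately show "j \<in> ds_block N t m" using assms by (auto simp: ds_block_def)
  qed
qed

lemma inj_row: "inj_on (\<lambda>b. (c::nat)*N + b) A" by (auto simp: inj_on_def)
lemma inj_col: "N > 0 \<Longrightarrow> c < N \<Longrightarrow> inj_on (\<lambda>a. a*N + (c::nat)) A"
  by (auto simp: inj_on_def)

lemma card_blk: assumes "m < N^2" shows "card (ds_block N t m) = N"
proof -
  have N: "N > 0" using assms by (cases N) auto
  show ?thesis
  proof (cases "even t")
    case True then show ?thesis using assms by (simp add: blk_even card_image inj_row)
  next
    case False then show ?thesis using assms N by (simp add: blk_odd card_image inj_col)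
  qed
qed

lemma blk_sym: "m < N^2 \<Longrightarrow> j \<in> ds_block N t m \<longleftrightarrow> j < N^2 \<and> m \<in> ds_block N t j"
  by (auto simp: ds_block_def)

lemma sum_grid:
  fixes f :: "nat \<Rightarrow> 'a::comm_monoid_add"
  shows "(\<Sum>j<N^2. f j) = (\<Sum>a<N. \<Sum>b<N. f (a*N+b))"
proof (cases "N = 0")
  case True then show ?thesis by simp
next
  case False
  then have N: "N > 0" by simp
  have bij: "bij_betw (\<lambda>(a,b). a*N+b) ({..<N} \<times> {..<N}) {..<N^2}"
  proof (rule bij_betwI[where g = "\<lambda>j. (j div N, j mod N)"])
    show "(\<lambda>(a,b). a*N+b) \<in> {..<N} \<times> {..<N} \<rightarrow> {..<N^2}"
    proof
      fix x assume "x \<in> {..<N} \<times> {..<N}"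
      then obtain a b where x: "x = (a,b)" "a < N" "b < N" by auto
      have "a*N+b < a*N + N" using x by simp
      also have "\<dots> = (a+1)*N" by simp
      also have "\<dots> \<le> N*N" using x by (intro mult_right_mono) auto
      finally show "(\<lambda>(a,b). a*N+b) x \<in> {..<N^2}" using x by (simp add: power2_eq_square)
    qed
    show "(\<lambda>j. (j div N, j mod N)) \<in> {..<N^2} \<rightarrow> {..<N} \<times> {..<N}"
      using N by (auto simp: power2_eq_square less_mult_imp_div_less)
    show "(\<lambda>j. (j div N, j mod N)) ((\<lambda>(a,b). a*N+b) x) = x" if "x \<in> {..<N} \<times> {..<N}" for x
      using that N by auto
    show "(\<lambda>(a,b). a*N+b) ((\<lambda>j. (j div N, j mod N)) y) = y" for y
      by (simp add: div_mult_mod_eq)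
  qed
  have "(\<Sum>j<N^2. f j) = (\<Sum>x\<in>{..<N} \<times> {..<N}. f ((\<lambda>(a,b). a*N+b) x))"
    using sum.reindex_bij_betw[OF bij, of f] by simp
  also have "\<dots> = (\<Sum>a<N. \<Sum>b<N. f (a*N+b))"
    by (simp add: sum.cartesian_product split_def)
  finally show ?thesis .
qed

lemma sum_if_sub: "B \<subseteq> A \<Longrightarrow> finite A \<Longrightarrow> (\<Sum>j\<in>A. if j \<in> B then f j else 0) = sum f B"
proof -
  assume a: "B \<subseteq> A" "finite A"
  have "(\<Sum>j\<in>A. if j \<in> B then f j else 0) = sum f (A \<inter> B)" by (rule sum.inter_restrict[OF a(2), symmetric])
  also have "A \<inter> B = B" using a by blast
  finally show ?thesis .
qed

lemma sum_blk_all: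
  fixes f :: "nat \<Rightarrow> 'a::real_vector"
  shows "(\<Sum>m<N^2. \<Sum>j\<in>ds_block N t m. f j) = real N *\<^sub>R (\<Sum>j<N^2. f j)"
proof -
  have "(\<Sum>m<N^2. \<Sum>j\<in>ds_block N t m. f j) = (\<Sum>m<N^2. \<Sum>j<N^2. if j \<in> ds_block N t m then f j else 0)"
    by (rule sum.cong[OF refl], rule sum_if_sub[symmetric]) (auto simp: blk_sub)
  also have "\<dots> = (\<Sum>j<N^2. \<Sum>m<N^2. if j \<in> ds_block N t m then f j else 0)"
    by (rule sum.swap)
  also have "\<dots> = (\<Sum>j<N^2. \<Sum>m\<in>ds_block N t j. f j)"
  proof (rule sum.cong[OF refl])
    fix j assume j: "j \<in> {..<N^2}"
    have "(\<Sum>m<N^2. if j \<in> ds_block N t m then f j else 0) = (\<Sum>m<N^2. if m \<in> ds_block N t j then f j else 0)"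
      using j by (intro sum.cong[OF refl]) (auto simp: ds_block_def)
    also have "\<dots> = (\<Sum>m\<in>ds_block N t j. f j)"
      by (rule sum_if_sub) (auto simp: blk_sub)
    finally show "(\<Sum>m<N^2. if j \<in> ds_block N t m then f j else 0) = (\<Sum>m\<in>ds_block N t j. f j)" .
  qed
  also have "\<dots> = (\<Sum>j<N^2. real N *\<^sub>R f j)"
    by (rule sum.cong[OF refl]) (simp add: card_blk sum_constant_scaleR)
  finally show ?thesis by (simp add: scaleR_sum_right)
qed

lemma sum_blk_next:
  fixes f :: "nat \<Rightarrow> 'a::real_vector"
  assumes m: "m < N^2"
  shows "(\<Sum>k\<in>ds_block N (Suc t) m. \<Sum>j\<in>ds_block N t k. f j) = (\<Sum>j<N^2. f j)"
proof -
  have N: "N > 0" using m by (cases N) auto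
  have lt: "a*N + b < N^2" if "a < N" "b < N" for a b
  proof -
    have "a*N+b < a*N + N" using that by simp
    also have "\<dots> = (a+1)*N" by simp
    also have "\<dots> \<le> N*N" using that by (intro mult_right_mono) auto
    finally show ?thesis by (simp add: power2_eq_square)
  qed
  show ?thesis
  proof (cases "even t")
    case True
    have "(\<Sum>k\<in>ds_block N (Suc t) m. \<Sum>j\<in>ds_block N t k. f j)
        = (\<Sum>a<N. \<Sum>j\<in>ds_block N t (a*N + m mod N). f j)"
      using True m N by (simp add: blk_odd sum.reindex inj_col)
    also have "\<dots> = (\<Sum>a<N. \<Sum>b<N. f (a*N+b))"
    proof (rule sum.cong[OF refl])
      fix a assume a: "a \<in> {..<N}"
      have "ds_block N t (a*N + m mod N) = (\<lambda>b. a*N + b) ` {..<N}"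
        using blk_even[OF True lt[of a "m mod N"]] a N by simp
      then show "(\<Sum>j\<in>ds_block N t (a*N + m mod N). f j) = (\<Sum>b<N. f (a*N+b))"
        by (simp add: sum.reindex inj_on_def)
    qed
    finally show ?thesis by (simp only: sum_grid)
  next
    case False
    have "(\<Sum>k\<in>ds_block N (Suc t) m. \<Sum>j\<in>ds_block N t k. f j)
        = (\<Sum>b<N. \<Sum>j\<in>ds_block N t ((m div N)*N + b). f j)"
      using False m N by (simp add: blk_even sum.reindex inj_row)
    also have "\<dots> = (\<Sum>b<N. \<Sum>a<N. f (a*N+b))"
    proof (rule sum.cong[OF refl])
      fix b assume b: "b \<in> {..<N}"
      have md: "m div N < N" using m N by (simp add: less_mult_imp_div_less power2_eq_square)
      have "ds_block N t ((m div N)*N + b) = (\<lambda>a. a*N + b) ` {..<N}"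
        using blk_odd[OF False lt[OF md, of b]] b N by simp
      then show "(\<Sum>j\<in>ds_block N t ((m div N)*N + b). f j) = (\<Sum>a<N. f (a*N+b))"
        using b N by (simp add: sum.reindex inj_col)
    qed
    also have "\<dots> = (\<Sum>a<N. \<Sum>b<N. f (a*N+b))" by (rule sum.swap)
    finally show ?thesis by (simp only: sum_grid)
  qed
qed




definition "abar N g eta w0 xi t \<omega> = (1/real (N^2)) *\<^sub>R (\<Sum>m<N^2. ds_iter N g eta w0 xi t m \<omega>)"
definition "gg N g eta w0 xi t j \<omega> = g (ds_iter N g eta w0 xi t j \<omega>) (xi t j \<omega>)"

lemma step_w:
  assumes "(1/real N) *\<^sub>R (\<Sum>k\<in>ds_block N t m. ds_iter N g eta w0 xi t k \<omega>) = abar N g eta w0 xi t \<omega>"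
  shows "ds_iter N g eta w0 xi (Suc t) m \<omega> = abar N g eta w0 xi t \<omega>
     - eta t *\<^sub>R ((1/real N) *\<^sub>R (\<Sum>j\<in>ds_block N t m. gg N g eta w0 xi t j \<omega>))"
  using assms by (simp add: gg_def sum_subtractf scaleR_diff_right scaleR_sum_right[symmetric])

lemma blk_avg:
  assumes N: "N \<ge> 1"
  shows "m < N^2 \<Longrightarrow> (1/real N) *\<^sub>R (\<Sum>k\<in>ds_block N t m. ds_iter N g eta w0 xi t k \<omega>) = abar N g eta w0 xi t \<omega>"
proof (induction t arbitrary: m)
  case 0
  have "(1/real N) *\<^sub>R (\<Sum>k\<in>ds_block N 0 m. ds_iter N g eta w0 xi 0 k \<omega>) = w0"
    using 0 N by (simp add: card_blk sum_constant_scaleR)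
  moreover have "abar N g eta w0 xi 0 \<omega> = w0"
    using N by (simp add: abar_def sum_constant_scaleR)
  ultimately show ?case by simp
next
  case (Suc t)
  define A where "A = abar N g eta w0 xi t \<omega>"
  define G where "G = (\<lambda>j. gg N g eta w0 xi t j \<omega>)"
  have wk: "ds_iter N g eta w0 xi (Suc t) k \<omega> = A - eta t *\<^sub>R ((1/real N) *\<^sub>R (\<Sum>j\<in>ds_block N t k. G j))"
    if "k < N^2" for k
    unfolding A_def G_def by (rule step_w[OF Suc.IH[OF that]])
  have "(\<Sum>k\<in>ds_block N (Suc t) m. ds_iter N g eta w0 xi (Suc t) k \<omega>)
      = (\<Sum>k\<in>ds_block N (Suc t) m. A - eta t *\<^sub>R ((1/real N) *\<^sub>R (\<Sum>j\<in>ds_block N t k. G j)))"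
    using blk_sub by (intro sum.cong refl wk) blast
  also have "\<dots> = real N *\<^sub>R A - (eta t / real N) *\<^sub>R (\<Sum>j<N^2. G j)"
    using Suc.prems by (simp add: sum_subtractf card_blk sum_constant_scaleR scaleR_sum_right[symmetric] sum_blk_next)
  finally have L: "(1/real N) *\<^sub>R (\<Sum>k\<in>ds_block N (Suc t) m. ds_iter N g eta w0 xi (Suc t) k \<omega>)
      = A - (eta t / (real N * real N)) *\<^sub>R (\<Sum>j<N^2. G j)"
    using N by (simp add: scaleR_diff_right)
  have "(\<Sum>m<N^2. ds_iter N g eta w0 xi (Suc t) m \<omega>)
      = (\<Sum>m<N^2. A - eta t *\<^sub>R ((1/real N) *\<^sub>R (\<Sum>j\<in>ds_block N t m. G j)))"
    by (intro sum.cong refl wk) simp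
  also have "\<dots> = real (N^2) *\<^sub>R A - (eta t) *\<^sub>R (\<Sum>j<N^2. G j)"
    using N by (simp add: sum_subtractf sum_constant_scaleR scaleR_sum_right[symmetric] sum_blk_all)
  finally have R: "abar N g eta w0 xi (Suc t) \<omega> = A - (eta t / (real N * real N)) *\<^sub>R (\<Sum>j<N^2. G j)"
    using N by (simp add: abar_def scaleR_diff_right power2_eq_square)
  show ?case using L R by simp
qed

lemma abar_step:
  assumes N: "N \<ge> 1"
  shows "abar N g eta w0 xi (Suc t) \<omega> = abar N g eta w0 xi t \<omega>
     - eta t *\<^sub>R ((1/real (N^2)) *\<^sub>R (\<Sum>j<N^2. gg N g eta w0 xi t j \<omega>))"
proof -
  define A where "A = abar N g eta w0 xi t \<omega>"
  define G where "G = (\<lambda>j. gg N g eta w0 xi t j \<omega>)"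
  have wk: "ds_iter N g eta w0 xi (Suc t) k \<omega> = A - eta t *\<^sub>R ((1/real N) *\<^sub>R (\<Sum>j\<in>ds_block N t k. G j))"
    if "k < N^2" for k
    unfolding A_def G_def by (rule step_w[OF blk_avg[OF N that]])
  have "(\<Sum>m<N^2. ds_iter N g eta w0 xi (Suc t) m \<omega>)
      = (\<Sum>m<N^2. A - eta t *\<^sub>R ((1/real N) *\<^sub>R (\<Sum>j\<in>ds_block N t m. G j)))"
    by (intro sum.cong refl wk) simp
  also have "\<dots> = real (N^2) *\<^sub>R A - (eta t) *\<^sub>R (\<Sum>j<N^2. G j)"
    using N by (simp add: sum_subtractf sum_constant_scaleR scaleR_sum_right[symmetric] sum_blk_all)
  finally show ?thesis
    using N by (simp add: abar_def scaleR_diff_right A_def G_def)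
qed

lemma w_step:
  assumes N: "N \<ge> 1" and m: "m < N^2"
  shows "ds_iter N g eta w0 xi (Suc t) m \<omega> = abar N g eta w0 xi t \<omega>
     - eta t *\<^sub>R ((1/real N) *\<^sub>R (\<Sum>j\<in>ds_block N t m. gg N g eta w0 xi t j \<omega>))"
  by (rule step_w[OF blk_avg[OF N m]])




lemma nab: "(norm (a + b))^2 = (norm a)^2 + 2*(a \<bullet> b) + (norm (b::'a::real_inner))^2"
  by (simp add: power2_norm_eq_inner inner_add_left inner_add_right inner_commute)

lemma sq_dev:
  fixes y :: "nat \<Rightarrow> 'a::real_inner"
  assumes fin: "finite I" and n: "card I > 0"
  defines "yb \<equiv> (1/real (card I)) *\<^sub>R (\<Sum>i\<in>I. y i)"
  shows "(\<Sum>i\<in>I. (norm (y i - c))^2) = (\<Sum>i\<in>I. (norm (y i - yb))^2) + real (card I) * (norm (yb - c))^2"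
proof -
  have e: "(norm (y i - c))^2 = (norm (y i - yb))^2 + 2 * ((y i - yb) \<bullet> (yb - c)) + (norm (yb - c))^2" for i
    using nab[of "y i - yb" "yb - c"] by simp
  have z: "(\<Sum>i\<in>I. y i - yb) = 0"
    using n by (simp add: sum_subtractf yb_def sum_constant_scaleR)
  have "(\<Sum>i\<in>I. (y i - yb) \<bullet> (yb - c)) = (\<Sum>i\<in>I. y i - yb) \<bullet> (yb - c)"
    by (simp add: inner_sum_left)
  then have z2: "(\<Sum>i\<in>I. (y i - yb) \<bullet> (yb - c)) = 0" using z by simp
  show ?thesis
    by (simp add: e sum.distrib sum_distrib_left[symmetric] z2)
qed

lemma jensen_sq:
  fixes y :: "nat \<Rightarrow> 'a::real_inner"
  assumes fin: "finite I" and n: "card I > 0"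
  shows "(norm ((1/real (card I)) *\<^sub>R (\<Sum>i\<in>I. y i) - c))^2 \<le> (1/real (card I)) * (\<Sum>i\<in>I. (norm (y i - c))^2)"
proof -
  have "real (card I) * (norm ((1/real (card I)) *\<^sub>R (\<Sum>i\<in>I. y i) - c))^2 \<le> (\<Sum>i\<in>I. (norm (y i - c))^2)"
    using sq_dev[OF fin n, of y c] by (simp add: sum_nonneg)
  then show ?thesis using n by (simp add: field_simps)
qed

locale dsl =
  fixes F :: "'a::euclidean_space \<Rightarrow> real" and F' :: "'a \<Rightarrow> 'a" and L \<mu> :: real and wstar :: 'a
  assumes smooth: "\<And>v w. F v \<le> F w + (v - w) \<bullet> F' w + L / 2 * (norm (v - w))^2"
    and mu_pos: "\<mu> > 0"
    and strconv: "\<And>v w. F v \<ge> F w + (v - w) \<bullet> F' w + \<mu> / 2 * (norm (v - w))^2"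
    and minimizer: "\<And>w. F wstar \<le> F w"
begin

lemma mu_le_L: "\<mu> \<le> L"
proof -
  obtain b :: 'a where b: "b \<in> Basis" using nonempty_Basis by blast
  have "F b \<le> F 0 + (b - 0) \<bullet> F' 0 + L / 2 * (norm (b - 0))^2" by (rule smooth)
  moreover have "F b \<ge> F 0 + (b - 0) \<bullet> F' 0 + \<mu> / 2 * (norm (b - 0))^2" by (rule strconv)
  ultimately have "\<mu> / 2 * (norm b)^2 \<le> L / 2 * (norm b)^2" by simp
  then show ?thesis using b by simp
qed

lemma L_pos: "L > 0" using mu_le_L mu_pos by simp

lemma F'_bound_gen: "(norm (F' x))^2 \<le> 2 * L * (F x - F wstar)"
proof -
  have "F (x - (1/L) *\<^sub>R F' x) \<le> F x + ((x - (1/L) *\<^sub>R F' x) - x) \<bullet> F' x + L / 2 * (norm ((x - (1/L) *\<^sub>R F' x) - x))^2"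
    by (rule smooth)
  also have "\<dots> = F x - (norm (F' x))^2 / (2 * L)"
  proof -
    have a: "((x - (1/L) *\<^sub>R F' x) - x) \<bullet> F' x = -(1/L) * (norm (F' x))^2" by (simp add: power2_norm_eq_inner)
    have b: "(norm ((x - (1/L) *\<^sub>R F' x) - x))^2 = (1/L)^2 * (norm (F' x))^2"
      using L_pos by (simp add: power_divide)
    show ?thesis unfolding a b using L_pos by (simp add: field_simps power2_eq_square)
  qed
  finally have "F wstar \<le> F x - (norm (F' x))^2 / (2 * L)" using minimizer order_trans by blast
  then show ?thesis using L_pos by (simp add: field_simps)
qed

lemma grad0: "F' wstar = 0"
  using F'_bound_gen[of wstar] by simp

lemma F_gap: "F x - F wstar \<le> L / 2 * (norm (x - wstar))^2"
  using smooth[of x wstar] by (simp add: grad0)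

lemma F'_bound: "(norm (F' x))^2 \<le> L^2 * (norm (x - wstar))^2"
proof -
  have "(norm (F' x))^2 \<le> 2 * L * (L / 2 * (norm (x - wstar))^2)"
  proof -
    have "2 * L * (F x - F wstar) \<le> 2 * L * (L / 2 * (norm (x - wstar))^2)"
      using F_gap[of x] L_pos by (intro mult_left_mono) auto
    then show ?thesis using F'_bound_gen[of x] by linarith
  qed
  then show ?thesis by (simp add: power2_eq_square)
qed

lemma conv_one: "(yb - wstar) \<bullet> F' y \<ge> \<mu>/2 * (norm (y - wstar))^2 - L/2 * (norm (yb - y))^2"
proof -
  have "F yb \<le> F y + (yb - y) \<bullet> F' y + L / 2 * (norm (yb - y))^2" by (rule smooth)
  moreover have "F wstar \<ge> F y + (wstar - y) \<bullet> F' y + \<mu> / 2 * (norm (wstar - y))^2" by (rule strconv)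
  moreover have "F wstar \<le> F yb" by (rule minimizer)
  moreover have "(yb - wstar) \<bullet> F' y = (yb - y) \<bullet> F' y - (wstar - y) \<bullet> F' y"
    by (simp add: inner_diff_left)
  moreover have "norm (wstar - y) = norm (y - wstar)" by (rule norm_minus_commute)
  ultimately show ?thesis by (simp add: algebra_simps)
qed

lemma conv_avg:
  fixes y :: "nat \<Rightarrow> 'a"
  assumes fin: "finite I" and n: "card I > 0"
  defines "yb \<equiv> (1/real (card I)) *\<^sub>R (\<Sum>i\<in>I. y i)"
  shows "(1/real (card I)) * (\<Sum>i\<in>I. (yb - wstar) \<bullet> F' (y i))
     \<ge> \<mu>/2 * (norm (yb - wstar))^2 - L/2 * ((1/real (card I)) * (\<Sum>i\<in>I. (norm (yb - y i))^2))"
proof -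
  define A where "A = (\<Sum>i\<in>I. (norm (y i - wstar))^2)"
  define B where "B = (\<Sum>i\<in>I. (norm (yb - y i))^2)"
  define S where "S = (\<Sum>i\<in>I. (yb - wstar) \<bullet> F' (y i))"
  define c where "c = 1/real (card I)"
  have "S \<ge> (\<Sum>i\<in>I. \<mu>/2 * (norm (y i - wstar))^2 - L/2 * (norm (yb - y i))^2)"
    unfolding S_def by (intro sum_mono conv_one)
  also have "(\<Sum>i\<in>I. \<mu>/2 * (norm (y i - wstar))^2 - L/2 * (norm (yb - y i))^2) = \<mu>/2 * A - L/2 * B"
    by (simp add: A_def B_def sum_subtractf sum_distrib_left)
  finally have h: "\<mu>/2 * A - L/2 * B \<le> S" .
  have c0: "c \<ge> 0" by (simp add: c_def)
  have "c * (\<mu>/2 * A - L/2 * B) \<le> c * S" by (rule mult_left_mono[OF h c0])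
  moreover have "c * (\<mu>/2 * A - L/2 * B) = \<mu>/2 * (c * A) - L/2 * (c * B)" by (simp add: algebra_simps)
  ultimately have "c * S \<ge> \<mu>/2 * (c * A) - L/2 * (c * B)" by simp
  then have "(1/real (card I)) * (\<Sum>i\<in>I. (yb - wstar) \<bullet> F' (y i))
     \<ge> \<mu>/2 * ((1/real (card I)) * (\<Sum>i\<in>I. (norm (y i - wstar))^2)) - L/2 * ((1/real (card I)) * (\<Sum>i\<in>I. (norm (yb - y i))^2))"
    unfolding A_def B_def S_def c_def .
  moreover have "(norm (yb - wstar))^2 \<le> (1/real (card I)) * (\<Sum>i\<in>I. (norm (y i - wstar))^2)"
    unfolding yb_def by (rule jensen_sq[OF fin n])
  then have "\<mu>/2 * (norm (yb - wstar))^2 \<le> \<mu>/2 * ((1/real (card I)) * (\<Sum>i\<in>I. (norm (y i - wstar))^2))"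
    using mu_pos by (intro mult_left_mono) auto
  ultimately show ?thesis by linarith
qed

end



context dsl begin

lemma grad_lip: "norm (F' y - F' x) \<le> L * norm (y - x)"
proof -
  define d where "d = F' y - F' x"
  define z where "z = y - (1/L) *\<^sub>R d"
  have s1: "F z \<le> F y + (z - y) \<bullet> F' y + L / 2 * (norm (z - y))^2" by (rule smooth)
  have s2: "F z \<ge> F x + (z - x) \<bullet> F' x + \<mu> / 2 * (norm (z - x))^2" by (rule strconv)
  have s3: "F y \<le> F x + (y - x) \<bullet> F' x + L / 2 * (norm (y - x))^2" by (rule smooth)
  have m0: "\<mu> / 2 * (norm (z - x))^2 \<ge> 0" using mu_pos by simp
  have zy: "z - y = - (1/L) *\<^sub>R d" by (simp add: z_def)
  have zx: "z - x = (y - x) - (1/L) *\<^sub>R d" by (simp add: z_def)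
  have e1: "(z - y) \<bullet> F' y = -(1/L) * (d \<bullet> F' y)" by (simp add: zy)
  have e2: "(z - x) \<bullet> F' x = (y - x) \<bullet> F' x - (1/L) * (d \<bullet> F' x)" by (simp add: zx inner_diff_left)
  have e3: "(norm (z - y))^2 = (1/L)^2 * (norm d)^2" using L_pos by (simp add: zy power_divide)
  have dd: "d \<bullet> F' y - d \<bullet> F' x = (norm d)^2" by (simp add: d_def inner_diff_right power2_norm_eq_inner)
  have "(1/L) * (d \<bullet> F' y - d \<bullet> F' x) \<le> L / 2 * (norm (y - x))^2 + L/2 * ((1/L)^2 * (norm d)^2)"
    using s1 s2 s3 m0 unfolding e1 e2 e3 by (simp add: algebra_simps)
  then have "(1/L) * (norm d)^2 \<le> L / 2 * (norm (y - x))^2 + (1/(2*L)) * (norm d)^2"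
    using L_pos unfolding dd by (simp add: power2_eq_square)
  then have "(1/(2*L)) * (norm d)^2 \<le> L / 2 * (norm (y - x))^2"
    using L_pos by (simp add: field_simps)
  then have "(norm d)^2 \<le> (L * norm (y - x))^2"
    using L_pos by (simp add: field_simps power2_eq_square)
  then show ?thesis unfolding d_def using L_pos
    using power2_le_imp_le L_pos by fastforce
qed

lemma F'_cont: "continuous_on UNIV F'"
proof -
  have "L-lipschitz_on UNIV F'"
    using L_pos by (intro lipschitz_onI) (auto simp: dist_norm grad_lip)
  then show ?thesis by (rule lipschitz_on_continuous_on)
qed

lemma F'_meas[measurable]: "F' \<in> borel_measurable borel"
  using F'_cont by (rule borel_measurable_continuous_onI)

end

locale dsp = dsl F F' L \<mu> wstar
  for F :: "'a::euclidean_space \<Rightarrow> real" and F' L \<mu> wstar +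
  fixes M :: "'p measure" and S :: "'b measure" and g :: "'a \<Rightarrow> 'b \<Rightarrow> 'a"
    and xi :: "nat \<Rightarrow> nat \<Rightarrow> 'p \<Rightarrow> 'b" and N :: nat and w0 :: 'a and G :: real
    and eta :: "nat \<Rightarrow> real"
  assumes prob: "prob_space M"
    and N_pos: "N \<ge> 1"
    and xi_meas: "\<And>t m. m < N^2 \<Longrightarrow> xi t m \<in> measurable M S"
    and g_meas: "(\<lambda>(w, z). g w z) \<in> borel_measurable (borel \<Otimes>\<^sub>M S)"
    and eta_def: "eta = (\<lambda>t. 2 / (\<mu> * (max (8 * (L / \<mu>)) 2 + real t)))"
    and unbiased: "\<And>t m b. m < N^2 \<Longrightarrow> b \<in> Basis \<Longrightarrow>
       AE \<omega> in M. real_cond_exp M (ds_filt M S N xi t) (\<lambda>\<omega>. g (ds_iter N g eta w0 xi t m \<omega>) (xi t m \<omega>) \<bullet> b) \<omega>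
                   = F' (ds_iter N g eta w0 xi t m \<omega>) \<bullet> b"
    and second_moment: "\<And>t m. m < N^2 \<Longrightarrow>
        (\<integral>\<^sup>+ \<omega>. ennreal ((norm (g (ds_iter N g eta w0 xi t m \<omega>) (xi t m \<omega>)))^2) \<partial>M) \<le> ennreal (G^2)"
begin

abbreviation "Ft t \<equiv> ds_filt M S N xi t"
abbreviation "w t m \<equiv> ds_iter N g eta w0 xi t m"

lemma gens_sub: "(\<Union>s<t. \<Union>m<N^2. {xi s m -` A \<inter> space M | A. A \<in> sets S}) \<subseteq> sets M"
  using xi_meas by (auto intro: measurable_sets)

lemma gens_pow: "(\<Union>s<t. \<Union>m<N^2. {xi s m -` A \<inter> space M | A. A \<in> sets S}) \<subseteq> Pow (space M)"
  by auto

lemma space_Ft[simp]: "space (Ft t) = space M"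
  by (simp add: ds_filt_def space_measure_of_conv)

lemma sets_Ft: "sets (Ft t) = sigma_sets (space M) (\<Union>s<t. \<Union>m<N^2. {xi s m -` A \<inter> space M | A. A \<in> sets S})"
  unfolding ds_filt_def by (rule sets_measure_of[OF gens_pow])

lemma subalg: "subalgebra M (Ft t)"
  unfolding subalgebra_def
  using sets.sigma_sets_subset[OF gens_sub] by (simp add: sets_Ft)

lemma subalg_mono: "s \<le> t \<Longrightarrow> subalgebra (Ft t) (Ft s)"
  unfolding subalgebra_def sets_Ft
  using order_less_le_trans by (fastforce intro!: sigma_sets_mono')

lemma fms: "finite_measure_subalgebra M (Ft t)"
proof -
  interpret prob_space M by (rule prob)
  show ?thesis by unfold_locales (rule subalg)
qed

lemma xi_meas_Ft: assumes st: "s < t" and m: "m < N^2" shows "xi s m \<in> measurable (Ft t) S"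
proof (rule measurableI)
  fix \<omega> assume "\<omega> \<in> space (Ft t)"
  then show "xi s m \<omega> \<in> space S" using measurable_space[OF xi_meas[OF m]] by simp
next
  fix A assume A: "A \<in> sets S"
  have "xi s m -` A \<inter> space M \<in> {xi s m -` A \<inter> space M | A. A \<in> sets S}" using A by blast
  then have "xi s m -` A \<inter> space M \<in> (\<Union>s<t. \<Union>m<N^2. {xi s m -` A \<inter> space M | A. A \<in> sets S})"
    by (intro UN_I[where a=s] UN_I[where a=m]) (use st m in simp_all)
  then show "xi s m -` A \<inter> space (Ft t) \<in> sets (Ft t)"
    unfolding sets_Ft space_Ft by (rule sigma_sets.Basic)
qed

lemma w_meas_Ft: "w t m \<in> borel_measurable (Ft t)"
proof (induction t arbitrary: m)
  case 0
  then show ?case by simp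
next
  case (Suc t)
  have j: "(\<lambda>\<omega>. w t j \<omega> - eta t *\<^sub>R g (w t j \<omega>) (xi t j \<omega>)) \<in> borel_measurable (Ft (Suc t))"
    if "j \<in> ds_block N t m" for j
  proof -
    have jl: "j < N^2" using that blk_sub by blast
    have wm: "w t j \<in> borel_measurable (Ft (Suc t))"
      by (rule measurable_from_subalg[OF subalg_mono[of t "Suc t"] Suc.IH]) simp
    have xm: "xi t j \<in> measurable (Ft (Suc t)) S" by (rule xi_meas_Ft[OF _ jl]) simp
    have gm: "(\<lambda>\<omega>. (\<lambda>(w, z). g w z) (w t j \<omega>, xi t j \<omega>)) \<in> borel_measurable (Ft (Suc t))"
      by (rule measurable_compose[OF measurable_Pair[OF wm xm] g_meas])
    show ?thesis using wm gm by simp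
  qed
  show ?case
    by (simp only: ds_iter.simps) (intro borel_measurable_scaleR borel_measurable_const borel_measurable_sum j)
qed

lemma w_meas[measurable]: "w t m \<in> borel_measurable M"
  by (rule measurable_from_subalg[OF subalg w_meas_Ft])

lemma gg_meas[measurable]: "m < N^2 \<Longrightarrow> (\<lambda>\<omega>. g (w t m \<omega>) (xi t m \<omega>)) \<in> borel_measurable M"
proof -
  assume m: "m < N^2"
  have "(\<lambda>\<omega>. (\<lambda>(w, z). g w z) (w t m \<omega>, xi t m \<omega>)) \<in> borel_measurable M"
    by (rule measurable_compose[OF measurable_Pair[OF w_meas xi_meas[OF m]] g_meas])
  then show ?thesis by simp
qed

end



definition "sqi M X \<longleftrightarrow> X \<in> borel_measurable M \<and> integrable M (\<lambda>\<omega>. (norm (X \<omega>))^2)"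

lemma norm_add_sq: "(norm (x + y))^2 \<le> 2 * (norm x)^2 + 2 * (norm (y::'a::real_inner))^2"
proof -
  have "2 * (x \<bullet> y) \<le> (norm x)^2 + (norm y)^2"
  proof -
    have "0 \<le> (norm (x - y))^2" by simp
    also have "\<dots> = (norm x)^2 - 2 * (x \<bullet> y) + (norm y)^2"
      by (simp add: power2_norm_eq_inner inner_diff_left inner_diff_right inner_commute)
    finally show ?thesis by simp
  qed
  then show ?thesis using nab[of x y] by simp
qed

lemma prod_le_sq: assumes "(a::real) \<ge> 0" "b \<ge> 0" shows "a * b \<le> a^2 + b^2"
proof -
  have "0 \<le> (a - b)^2" by simp
  then have "2 * (a * b) \<le> a^2 + b^2" by (simp add: power2_diff)
  moreover have "a * b \<ge> 0" using assms by simp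
  ultimately show ?thesis by linarith
qed

lemma inner_le_sq: "\<bar>x \<bullet> y\<bar> \<le> (norm x)^2 + (norm (y::'a::real_inner))^2"
proof -
  have "\<bar>x \<bullet> y\<bar> \<le> norm x * norm y" by (rule Cauchy_Schwarz_ineq2)
  also have "\<dots> \<le> (norm x)^2 + (norm y)^2"
    by (rule prod_le_sq) auto
  finally show ?thesis .
qed

lemma integrable_by_sq:
  fixes f :: "'p \<Rightarrow> real" and X Y :: "'p \<Rightarrow> 'c::euclidean_space"
  assumes "sqi M X" "sqi M Y" "f \<in> borel_measurable M"
    and "\<And>\<omega>. \<bar>f \<omega>\<bar> \<le> (norm (X \<omega>))^2 + (norm (Y \<omega>))^2"
  shows "integrable M f"
proof -
  have i: "integrable M (\<lambda>\<omega>. (norm (X \<omega>))^2 + (norm (Y \<omega>))^2)"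
    using assms(1,2) by (auto simp: sqi_def)
  show ?thesis
  proof (rule Bochner_Integration.integrable_bound[OF i])
  show "f \<in> borel_measurable M" by fact
  show "AE x in M. norm (f x) \<le> norm ((norm (X x))^2 + (norm (Y x))^2)"
    using assms(4) by auto
qed
qed

lemma sqi_add: fixes X Y :: "'p \<Rightarrow> 'c::euclidean_space" assumes "sqi M X" "sqi M Y" shows "sqi M (\<lambda>\<omega>. X \<omega> + Y \<omega>)"
proof -
  have [measurable]: "X \<in> borel_measurable M" "Y \<in> borel_measurable M" using assms by (auto simp: sqi_def)
  have m: "(\<lambda>\<omega>. X \<omega> + Y \<omega>) \<in> borel_measurable M" by measurable
  have "integrable M (\<lambda>\<omega>. 2 * (norm (X \<omega>))^2 + 2 * (norm (Y \<omega>))^2)"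
    using assms by (auto simp: sqi_def)
  then have "integrable M (\<lambda>\<omega>. (norm (X \<omega> + Y \<omega>))^2)"
    by (rule Bochner_Integration.integrable_bound) (use m norm_add_sq in auto)
  with m show ?thesis by (simp add: sqi_def)
qed

lemma sqi_scale: fixes X Y :: "'p \<Rightarrow> 'c::euclidean_space" assumes "sqi M X" shows "sqi M (\<lambda>\<omega>. c *\<^sub>R X \<omega>)"
  using assms by (auto simp: sqi_def power_mult_distrib)

lemma sqi_neg: fixes X Y :: "'p \<Rightarrow> 'c::euclidean_space" assumes "sqi M X" shows "sqi M (\<lambda>\<omega>. - X \<omega>)"
proof -
  have [measurable]: "X \<in> borel_measurable M" using assms by (auto simp: sqi_def)
  show ?thesis using assms unfolding sqi_def by auto
qed

lemma sqi_diff: fixes X Y :: "'p \<Rightarrow> 'c::euclidean_space" assumes "sqi M X" "sqi M Y" shows "sqi M (\<lambda>\<omega>. X \<omega> - Y \<omega>)"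
  using sqi_add[OF assms(1) sqi_neg[OF assms(2)]] by simp

lemma sqi_const: fixes c :: "'c::euclidean_space" shows "finite_measure M \<Longrightarrow> sqi M (\<lambda>\<omega>. c)"
  by (auto simp: sqi_def finite_measure.integrable_const)

lemma sqi_sum: fixes X :: "'i \<Rightarrow> 'p \<Rightarrow> 'c::euclidean_space" assumes "finite_measure M" "\<And>i. i \<in> I \<Longrightarrow> sqi M (X i)"
  shows "sqi M (\<lambda>\<omega>. \<Sum>i\<in>I. X i \<omega>)"
  using assms(2)
proof (induction I rule: infinite_finite_induct)
  case (infinite A) then show ?case using sqi_const[OF assms(1), of 0] by simp
next
  case empty then show ?case using sqi_const[OF assms(1), of 0] by simp
next
  case (insert x F) then show ?case by (simp add: sqi_add)
qed

lemma sqi_inner_int: fixes X Y :: "'p \<Rightarrow> 'c::euclidean_space" assumes "sqi M X" "sqi M Y" shows "integrable M (\<lambda>\<omega>. X \<omega> \<bullet> Y \<omega>)"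
  by (rule integrable_by_sq[OF assms]) (use assms in \<open>auto simp: sqi_def intro: inner_le_sq\<close>)

lemma sqi_sq_int: "sqi M X \<Longrightarrow> integrable M (\<lambda>\<omega>. (norm (X \<omega>))^2)"
  by (simp add: sqi_def)

context dsp begin

lemma fin: "finite_measure M"
  using prob by (simp add: prob_space_def)

lemma gg_sqi: assumes m: "m < N^2" shows "sqi M (\<lambda>\<omega>. g (w t m \<omega>) (xi t m \<omega>))"
  and "(\<integral>\<omega>. (norm (g (w t m \<omega>) (xi t m \<omega>)))^2 \<partial>M) \<le> G^2"
proof -
  have sm: "(\<lambda>\<omega>. (norm (g (w t m \<omega>) (xi t m \<omega>)))^2) \<in> borel_measurable M" using m by measurable
  have "(\<integral>\<^sup>+\<omega>. ennreal (norm ((norm (g (w t m \<omega>) (xi t m \<omega>)))^2)) \<partial>M) \<le> ennreal (G^2)"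
    using second_moment[OF m] by simp
  also have "\<dots> < \<infinity>" by simp
  finally have i: "integrable M (\<lambda>\<omega>. (norm (g (w t m \<omega>) (xi t m \<omega>)))^2)"
    by (rule integrableI_bounded[OF sm])
  then show "sqi M (\<lambda>\<omega>. g (w t m \<omega>) (xi t m \<omega>))" using m by (simp add: sqi_def)
  have "ennreal (\<integral>\<omega>. (norm (g (w t m \<omega>) (xi t m \<omega>)))^2 \<partial>M) = (\<integral>\<^sup>+\<omega>. ennreal ((norm (g (w t m \<omega>) (xi t m \<omega>)))^2) \<partial>M)"
    by (rule nn_integral_eq_integral[OF i, symmetric]) simp
  also have "\<dots> \<le> ennreal (G^2)" by (rule second_moment[OF m])
  finally have "ennreal (\<integral>\<omega>. (norm (g (w t m \<omega>) (xi t m \<omega>)))^2 \<partial>M) \<le> ennreal (G^2)" .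
  then show "(\<integral>\<omega>. (norm (g (w t m \<omega>) (xi t m \<omega>)))^2 \<partial>M) \<le> G^2"
    by (simp add: ennreal_le_iff[OF zero_le_power2])
qed

lemma w_sqi: "sqi M (w t m)"
proof (induction t arbitrary: m)
  case 0 then show ?case using sqi_const[OF fin] by simp
next
  case (Suc t)
  have "sqi M (\<lambda>\<omega>. (1 / real N) *\<^sub>R (\<Sum>j\<in>ds_block N t m. w t j \<omega> - eta t *\<^sub>R g (w t j \<omega>) (xi t j \<omega>)))"
    using blk_sub by (intro sqi_scale sqi_sum[OF fin] sqi_diff Suc.IH gg_sqi) auto
  then show ?case by (simp only: ds_iter.simps)
qed

lemma F'_sqi: assumes "sqi M X" shows "sqi M (\<lambda>\<omega>. F' (X \<omega>))"
proof -
  have m: "(\<lambda>\<omega>. F' (X \<omega>)) \<in> borel_measurable M" using assms unfolding sqi_def by (intro measurable_compose[OF _ F'_meas]) auto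
  have "integrable M (\<lambda>\<omega>. L^2 * (2 * (norm (X \<omega>))^2 + 2 * (norm wstar)^2))"
    using assms fin by (auto simp: sqi_def finite_measure.integrable_const)
  then have "integrable M (\<lambda>\<omega>. (norm (F' (X \<omega>)))^2)"
  proof (rule Bochner_Integration.integrable_bound)
    show "AE x in M. norm ((norm (F' (X x)))^2) \<le> norm (L^2 * (2 * (norm (X x))^2 + 2 * (norm wstar)^2))"
    proof (rule AE_I2)
      fix x
      have "(norm (F' (X x)))^2 \<le> L^2 * (norm (X x - wstar))^2" by (rule F'_bound)
      also have "\<dots> \<le> L^2 * (2 * (norm (X x))^2 + 2 * (norm wstar)^2)"
        using norm_add_sq[of "X x" "- wstar"] by (intro mult_left_mono) auto
      finally show "norm ((norm (F' (X x)))^2) \<le> norm (L^2 * (2 * (norm (X x))^2 + 2 * (norm wstar)^2))"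
        by simp
    qed
  qed (use m in simp)
  with m show ?thesis by (simp add: sqi_def)
qed

lemma tower:
  assumes X: "X \<in> borel_measurable (Ft t)" "sqi M X" and m: "m < N^2"
  shows "(\<integral>\<omega>. X \<omega> \<bullet> g (w t m \<omega>) (xi t m \<omega>) \<partial>M) = (\<integral>\<omega>. X \<omega> \<bullet> F' (w t m \<omega>) \<partial>M)"
proof -
  interpret sigma_finite_subalgebra M "Ft t"
    using fms finite_measure_subalgebra_is_sigma_finite by blast
  have Xm[measurable]: "X \<in> borel_measurable M" using X by (simp add: sqi_def)
  note gs = gg_sqi(1)[OF m, of t]
  note fs = F'_sqi[OF w_sqi[of t m]]
  have b: "(\<integral>\<omega>. (X \<omega> \<bullet> b) * (g (w t m \<omega>) (xi t m \<omega>) \<bullet> b) \<partial>M) = (\<integral>\<omega>. (X \<omega> \<bullet> b) * (F' (w t m \<omega>) \<bullet> b) \<partial>M)"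
    if b: "b \<in> Basis" for b
  proof -
    have fm: "(\<lambda>\<omega>. X \<omega> \<bullet> b) \<in> borel_measurable (Ft t)" using X(1) by measurable
    have gm: "(\<lambda>\<omega>. g (w t m \<omega>) (xi t m \<omega>) \<bullet> b) \<in> borel_measurable M" using m by measurable
    have "\<bar>(X \<omega> \<bullet> b) * (g (w t m \<omega>) (xi t m \<omega>) \<bullet> b)\<bar> \<le> (norm (X \<omega>))^2 + (norm (g (w t m \<omega>) (xi t m \<omega>)))^2" for \<omega>
    proof -
      have "\<bar>(X \<omega> \<bullet> b) * (g (w t m \<omega>) (xi t m \<omega>) \<bullet> b)\<bar> \<le> norm (X \<omega>) * norm (g (w t m \<omega>) (xi t m \<omega>))"
        unfolding abs_mult using b by (intro mult_mono) (auto simp: Basis_le_norm)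
      also have "\<dots> \<le> (norm (X \<omega>))^2 + (norm (g (w t m \<omega>) (xi t m \<omega>)))^2"
        by (rule prod_le_sq) auto
      finally show ?thesis .
    qed
    then have int: "integrable M (\<lambda>\<omega>. (X \<omega> \<bullet> b) * (g (w t m \<omega>) (xi t m \<omega>) \<bullet> b))"
      using m by (intro integrable_by_sq[OF X(2) gs]) auto
    have "(\<integral>\<omega>. (X \<omega> \<bullet> b) * (g (w t m \<omega>) (xi t m \<omega>) \<bullet> b) \<partial>M)
        = (\<integral>\<omega>. (X \<omega> \<bullet> b) * real_cond_exp M (Ft t) (\<lambda>\<omega>. g (w t m \<omega>) (xi t m \<omega>) \<bullet> b) \<omega> \<partial>M)"
      using real_cond_exp_intg(2)[OF int fm gm] by simp
    also have "\<dots> = (\<integral>\<omega>. (X \<omega> \<bullet> b) * (F' (w t m \<omega>) \<bullet> b) \<partial>M)"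
    proof (rule integral_cong_AE)
      show "(\<lambda>\<omega>. (X \<omega> \<bullet> b) * real_cond_exp M (Ft t) (\<lambda>\<omega>. g (w t m \<omega>) (xi t m \<omega>) \<bullet> b) \<omega>) \<in> borel_measurable M"
        by measurable
      show "(\<lambda>\<omega>. (X \<omega> \<bullet> b) * (F' (w t m \<omega>) \<bullet> b)) \<in> borel_measurable M" by measurable
      show "AE \<omega> in M. (X \<omega> \<bullet> b) * real_cond_exp M (Ft t) (\<lambda>\<omega>. g (w t m \<omega>) (xi t m \<omega>) \<bullet> b) \<omega> = (X \<omega> \<bullet> b) * (F' (w t m \<omega>) \<bullet> b)"
        using unbiased[OF m b, of t] by eventually_elim simp
    qed
    finally show ?thesis .
  qed
  have i1: "integrable M (\<lambda>\<omega>. (X \<omega> \<bullet> b) * (V \<omega> \<bullet> b))" if "sqi M V" "b \<in> Basis" for V b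
  proof (rule integrable_by_sq[OF X(2) that(1)])
    have [measurable]: "V \<in> borel_measurable M" using that by (simp add: sqi_def)
    show "(\<lambda>\<omega>. (X \<omega> \<bullet> b) * (V \<omega> \<bullet> b)) \<in> borel_measurable M" by measurable
    fix \<omega>
    have "\<bar>(X \<omega> \<bullet> b) * (V \<omega> \<bullet> b)\<bar> \<le> norm (X \<omega>) * norm (V \<omega>)"
      unfolding abs_mult using that by (intro mult_mono) (auto simp: Basis_le_norm)
    also have "\<dots> \<le> (norm (X \<omega>))^2 + (norm (V \<omega>))^2"
      by (rule prod_le_sq) auto
    finally show "\<bar>(X \<omega> \<bullet> b) * (V \<omega> \<bullet> b)\<bar> \<le> (norm (X \<omega>))^2 + (norm (V \<omega>))^2" .
  qed
  have "(\<integral>\<omega>. X \<omega> \<bullet> g (w t m \<omega>) (xi t m \<omega>) \<partial>M) = (\<integral>\<omega>. (\<Sum>b\<in>Basis. (X \<omega> \<bullet> b) * (g (w t m \<omega>) (xi t m \<omega>) \<bullet> b)) \<partial>M)"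
    by (rule Bochner_Integration.integral_cong[OF refl], rule euclidean_inner)
  also have "\<dots> = (\<Sum>b\<in>Basis. (\<integral>\<omega>. (X \<omega> \<bullet> b) * (g (w t m \<omega>) (xi t m \<omega>) \<bullet> b) \<partial>M))"
    by (rule Bochner_Integration.integral_sum) (auto intro: i1[OF gs])
  also have "\<dots> = (\<Sum>b\<in>Basis. (\<integral>\<omega>. (X \<omega> \<bullet> b) * (F' (w t m \<omega>) \<bullet> b) \<partial>M))"
    by (rule sum.cong[OF refl]) (rule b)
  also have "\<dots> = (\<integral>\<omega>. (\<Sum>b\<in>Basis. (X \<omega> \<bullet> b) * (F' (w t m \<omega>) \<bullet> b)) \<partial>M)"
    by (rule Bochner_Integration.integral_sum[symmetric]) (auto intro: i1[OF fs])
  also have "\<dots> = (\<integral>\<omega>. X \<omega> \<bullet> F' (w t m \<omega>) \<partial>M)"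
    by (rule Bochner_Integration.integral_cong[OF refl], rule euclidean_inner[symmetric])
  finally show ?thesis .
qed

end



context dsp begin

abbreviation "ab t \<equiv> abar N g eta w0 xi t"
abbreviation "gv t j \<omega> \<equiv> g (w t j \<omega>) (xi t j \<omega>)"
definition "gb t \<omega> = (1/real (N^2)) *\<^sub>R (\<Sum>j<N^2. gv t j \<omega>)"
definition "cons t \<omega> = (1/real (N^2)) * (\<Sum>j<N^2. (norm (ab t \<omega> - w t j \<omega>))^2)"

lemma norm_diff_scale_sq: "(norm (x - c *\<^sub>R v))^2 = (norm x)^2 - 2*c*(x \<bullet> v) + c^2*(norm (v::'c::real_inner))^2"
proof -
  have "(norm (x - c *\<^sub>R v))^2 = (x - c *\<^sub>R v) \<bullet> (x - c *\<^sub>R v)" by (rule power2_norm_eq_inner)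
  also have "\<dots> = x \<bullet> x - 2*c*(x \<bullet> v) + c^2*(v \<bullet> v)"
    by (simp add: inner_diff_left inner_diff_right inner_commute power2_eq_square algebra_simps)
  also have "x \<bullet> x = (norm x)^2" by (rule power2_norm_eq_inner[symmetric])
  also have "v \<bullet> v = (norm v)^2" by (rule power2_norm_eq_inner[symmetric])
  finally show ?thesis .
qed

lemma N2: "real (N^2) > 0" using N_pos by simp

lemma ab_meas_Ft: "ab t \<in> borel_measurable (Ft t)"
proof -
  have "(\<lambda>\<omega>. (1/real (N^2)) *\<^sub>R (\<Sum>m<N^2. w t m \<omega>)) \<in> borel_measurable (Ft t)"
    by (intro borel_measurable_scaleR borel_measurable_const borel_measurable_sum w_meas_Ft)
  then show ?thesis by (simp add: abar_def[abs_def])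
qed

lemma ab_sqi: "sqi M (ab t)"
proof -
  have "sqi M (\<lambda>\<omega>. (1/real (N^2)) *\<^sub>R (\<Sum>m<N^2. w t m \<omega>))"
    by (intro sqi_scale sqi_sum[OF fin] w_sqi)
  then show ?thesis by (simp add: abar_def[abs_def])
qed

lemma gb_sqi: "sqi M (gb t)"
proof -
  have "sqi M (\<lambda>\<omega>. (1/real (N^2)) *\<^sub>R (\<Sum>j<N^2. gv t j \<omega>))"
    by (intro sqi_scale sqi_sum[OF fin] gg_sqi) auto
  then show ?thesis by (simp add: gb_def[abs_def])
qed

lemma X_sqi: "sqi M (\<lambda>\<omega>. ab t \<omega> - wstar)"
  by (intro sqi_diff ab_sqi sqi_const[OF fin])

lemma X_meas_Ft: "(\<lambda>\<omega>. ab t \<omega> - wstar) \<in> borel_measurable (Ft t)"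
  using ab_meas_Ft by measurable

lemma cons_int: "integrable M (cons t)"
proof -
  have "integrable M (\<lambda>\<omega>. (1/real (N^2)) * (\<Sum>j<N^2. (norm (ab t \<omega> - w t j \<omega>))^2))"
    by (intro integrable_mult_right Bochner_Integration.integrable_sum sqi_sq_int sqi_diff ab_sqi w_sqi)
  then show ?thesis by (simp add: cons_def[abs_def])
qed

lemma ab_step: "ab (Suc t) \<omega> = ab t \<omega> - eta t *\<^sub>R gb t \<omega>"
  using abar_step[OF N_pos] by (simp add: gb_def gg_def)

lemma gb_bound: "(\<integral>\<omega>. (norm (gb t \<omega>))^2 \<partial>M) \<le> G^2"
proof -
  have p: "(norm (gb t \<omega>))^2 \<le> (1/real (N^2)) * (\<Sum>j<N^2. (norm (gv t j \<omega>))^2)" for \<omega>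
    using jensen_sq[of "{..<N^2}" "\<lambda>j. gv t j \<omega>" 0] N_pos by (simp add: gb_def)
  have i: "integrable M (\<lambda>\<omega>. (1/real (N^2)) * (\<Sum>j<N^2. (norm (gv t j \<omega>))^2))"
    by (intro integrable_mult_right Bochner_Integration.integrable_sum sqi_sq_int gg_sqi) auto
  have "(\<integral>\<omega>. (norm (gb t \<omega>))^2 \<partial>M) \<le> (\<integral>\<omega>. (1/real (N^2)) * (\<Sum>j<N^2. (norm (gv t j \<omega>))^2) \<partial>M)"
    by (rule integral_mono[OF sqi_sq_int[OF gb_sqi] i p])
  also have "\<dots> = (1/real (N^2)) * (\<Sum>j<N^2. (\<integral>\<omega>. (norm (gv t j \<omega>))^2 \<partial>M))"
    by (simp add: Bochner_Integration.integral_sum sqi_sq_int gg_sqi)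
  also have "\<dots> \<le> (1/real (N^2)) * (\<Sum>j<N^2. G^2)"
    by (intro mult_left_mono sum_mono gg_sqi(2)) auto
  also have "\<dots> = G^2" using N2 by simp
  finally show ?thesis .
qed

lemma cross_term:
  "(\<integral>\<omega>. (ab t \<omega> - wstar) \<bullet> gb t \<omega> \<partial>M) \<ge> \<mu>/2 * (\<integral>\<omega>. (norm (ab t \<omega> - wstar))^2 \<partial>M) - L/2 * (\<integral>\<omega>. cons t \<omega> \<partial>M)"
proof -
  note Xs = X_sqi[of t]
  have "(\<integral>\<omega>. (ab t \<omega> - wstar) \<bullet> gb t \<omega> \<partial>M) = (\<integral>\<omega>. (1/real (N^2)) * (\<Sum>j<N^2. (ab t \<omega> - wstar) \<bullet> gv t j \<omega>) \<partial>M)"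
    by (simp add: gb_def inner_sum_right)
  also have "\<dots> = (1/real (N^2)) * (\<Sum>j<N^2. (\<integral>\<omega>. (ab t \<omega> - wstar) \<bullet> gv t j \<omega> \<partial>M))"
    by (simp add: Bochner_Integration.integral_sum sqi_inner_int[OF Xs] gg_sqi)
  also have "\<dots> = (1/real (N^2)) * (\<Sum>j<N^2. (\<integral>\<omega>. (ab t \<omega> - wstar) \<bullet> F' (w t j \<omega>) \<partial>M))"
    by (simp add: tower[OF X_meas_Ft Xs])
  also have "\<dots> = (\<integral>\<omega>. (1/real (N^2)) * (\<Sum>j<N^2. (ab t \<omega> - wstar) \<bullet> F' (w t j \<omega>)) \<partial>M)"
    by (simp add: Bochner_Integration.integral_sum sqi_inner_int[OF Xs] F'_sqi w_sqi)
  also have "\<dots> \<ge> (\<integral>\<omega>. \<mu>/2 * (norm (ab t \<omega> - wstar))^2 - L/2 * cons t \<omega> \<partial>M)"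
  proof (rule integral_mono)
    show "integrable M (\<lambda>\<omega>. \<mu>/2 * (norm (ab t \<omega> - wstar))^2 - L/2 * cons t \<omega>)"
      by (intro Bochner_Integration.integrable_diff integrable_mult_right sqi_sq_int Xs cons_int)
    show "integrable M (\<lambda>\<omega>. (1/real (N^2)) * (\<Sum>j<N^2. (ab t \<omega> - wstar) \<bullet> F' (w t j \<omega>)))"
      by (intro integrable_mult_right Bochner_Integration.integrable_sum sqi_inner_int[OF Xs] F'_sqi w_sqi)
    fix \<omega>
    have "ab t \<omega> = (1/real (card {..<N^2})) *\<^sub>R (\<Sum>i\<in>{..<N^2}. w t i \<omega>)"
      by (simp add: abar_def)
    then show "\<mu>/2 * (norm (ab t \<omega> - wstar))^2 - L/2 * cons t \<omega> \<le> (1/real (N^2)) * (\<Sum>j<N^2. (ab t \<omega> - wstar) \<bullet> F' (w t j \<omega>))"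
      using conv_avg[of "{..<N^2}" "\<lambda>i. w t i \<omega>"] N_pos by (simp add: cons_def)
  qed
  also have "(\<integral>\<omega>. \<mu>/2 * (norm (ab t \<omega> - wstar))^2 - L/2 * cons t \<omega> \<partial>M)
      = \<mu>/2 * (\<integral>\<omega>. (norm (ab t \<omega> - wstar))^2 \<partial>M) - L/2 * (\<integral>\<omega>. cons t \<omega> \<partial>M)"
    using sqi_sq_int[OF Xs] cons_int by simp
  finally show ?thesis .
qed


lemma eta_pos: "eta t > 0"
proof -
  have "max (8 * (L / \<mu>)) 2 + real t > 0" by (simp add: max_def)
  then show ?thesis using mu_pos by (simp add: eta_def)
qed

lemma a_step:
  "(\<integral>\<omega>. (norm (ab (Suc t) \<omega> - wstar))^2 \<partial>M) \<le> (1 - \<mu> * eta t) * (\<integral>\<omega>. (norm (ab t \<omega> - wstar))^2 \<partial>M)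
     + eta t * L * (\<integral>\<omega>. cons t \<omega> \<partial>M) + (eta t)^2 * G^2"
proof -
  note Xs = X_sqi[of t]
  have pw: "(norm (ab (Suc t) \<omega> - wstar))^2 = (norm (ab t \<omega> - wstar))^2 - 2 * eta t * ((ab t \<omega> - wstar) \<bullet> gb t \<omega>) + (eta t)^2 * (norm (gb t \<omega>))^2" for \<omega>
  proof -
    have "ab (Suc t) \<omega> - wstar = (ab t \<omega> - wstar) - eta t *\<^sub>R gb t \<omega>" by (simp add: ab_step)
    then show ?thesis by (simp only: norm_diff_scale_sq)
  qed
  have "(\<integral>\<omega>. (norm (ab (Suc t) \<omega> - wstar))^2 \<partial>M) = (\<integral>\<omega>. (norm (ab t \<omega> - wstar))^2 - 2 * eta t * ((ab t \<omega> - wstar) \<bullet> gb t \<omega>) + (eta t)^2 * (norm (gb t \<omega>))^2 \<partial>M)"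
    by (simp only: pw)
  also have "\<dots> = (\<integral>\<omega>. (norm (ab t \<omega> - wstar))^2 \<partial>M) - 2 * eta t * (\<integral>\<omega>. (ab t \<omega> - wstar) \<bullet> gb t \<omega> \<partial>M) + (eta t)^2 * (\<integral>\<omega>. (norm (gb t \<omega>))^2 \<partial>M)"
    using sqi_sq_int[OF Xs] sqi_inner_int[OF Xs gb_sqi] sqi_sq_int[OF gb_sqi[of t]] by simp
  also have "\<dots> \<le> (\<integral>\<omega>. (norm (ab t \<omega> - wstar))^2 \<partial>M) - 2 * eta t * (\<mu>/2 * (\<integral>\<omega>. (norm (ab t \<omega> - wstar))^2 \<partial>M) - L/2 * (\<integral>\<omega>. cons t \<omega> \<partial>M)) + (eta t)^2 * G^2"
  proof -
    have "2 * eta t * (\<mu>/2 * (\<integral>\<omega>. (norm (ab t \<omega> - wstar))^2 \<partial>M) - L/2 * (\<integral>\<omega>. cons t \<omega> \<partial>M)) \<le> 2 * eta t * (\<integral>\<omega>. (ab t \<omega> - wstar) \<bullet> gb t \<omega> \<partial>M)"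
      using cross_term[of t] eta_pos[of t] by (intro mult_left_mono) auto
    moreover have "(eta t)^2 * (\<integral>\<omega>. (norm (gb t \<omega>))^2 \<partial>M) \<le> (eta t)^2 * G^2"
      using gb_bound[of t] by (intro mult_left_mono) auto
    ultimately show ?thesis by linarith
  qed
  also have "\<dots> = (1 - \<mu> * eta t) * (\<integral>\<omega>. (norm (ab t \<omega> - wstar))^2 \<partial>M) + eta t * L * (\<integral>\<omega>. cons t \<omega> \<partial>M) + (eta t)^2 * G^2"
    by (simp add: algebra_simps)
  finally show ?thesis .
qed

lemma cons_zero: "cons 0 \<omega> = 0"
  using N_pos by (simp add: cons_def abar_def sum_constant_scaleR)

lemma cons_bound: "(\<integral>\<omega>. cons (Suc t) \<omega> \<partial>M) \<le> 4 * (eta t)^2 * G^2"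
proof -
  define avB where "avB j \<omega> = (1/real N) *\<^sub>R (\<Sum>k\<in>ds_block N t j. gv t k \<omega>)" for j \<omega>
  define B where "B j \<omega> = (eta t)^2 * (2 * ((1/real N) * (\<Sum>k\<in>ds_block N t j. (norm (gv t k \<omega>))^2)) + 2 * (norm (gb t \<omega>))^2)" for j \<omega>
  have Bi: "integrable M (B j)" for j
    unfolding B_def using blk_sub
    by (intro integrable_mult_right Bochner_Integration.integrable_add Bochner_Integration.integrable_sum sqi_sq_int gg_sqi gb_sqi) auto
  have pw: "(norm (ab (Suc t) \<omega> - w (Suc t) j \<omega>))^2 \<le> B j \<omega>" if j: "j < N^2" for j \<omega>
  proof -
    have "w (Suc t) j \<omega> = ab t \<omega> - eta t *\<^sub>R avB j \<omega>"
      using w_step[OF N_pos j] by (simp add: avB_def gg_def)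
    then have "ab (Suc t) \<omega> - w (Suc t) j \<omega> = eta t *\<^sub>R (avB j \<omega> + - gb t \<omega>)"
      by (simp add: ab_step algebra_simps)
    then have "(norm (ab (Suc t) \<omega> - w (Suc t) j \<omega>))^2 = (eta t)^2 * (norm (avB j \<omega> + - gb t \<omega>))^2"
      by (simp add: power_mult_distrib)
    also have "\<dots> \<le> (eta t)^2 * (2 * (norm (avB j \<omega>))^2 + 2 * (norm (gb t \<omega>))^2)"
      using norm_add_sq[of "avB j \<omega>" "- gb t \<omega>"] by (intro mult_left_mono) auto
    also have "\<dots> \<le> B j \<omega>"
    proof -
      have "(norm (avB j \<omega>))^2 \<le> (1/real N) * (\<Sum>k\<in>ds_block N t j. (norm (gv t k \<omega>))^2)"
        using jensen_sq[of "ds_block N t j" "\<lambda>k. gv t k \<omega>" 0] card_blk[OF j] N_pos finite_subset[OF blk_sub] by (simp add: avB_def)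
      then show ?thesis unfolding B_def by (intro mult_left_mono) auto
    qed
    finally show ?thesis .
  qed
  have IB: "(\<integral>\<omega>. B j \<omega> \<partial>M) \<le> 4 * (eta t)^2 * G^2" if j: "j < N^2" for j
  proof -
    have s: "(\<integral>\<omega>. (\<Sum>k\<in>ds_block N t j. (norm (gv t k \<omega>))^2) \<partial>M) \<le> real N * G^2"
    proof -
      have "(\<integral>\<omega>. (\<Sum>k\<in>ds_block N t j. (norm (gv t k \<omega>))^2) \<partial>M) = (\<Sum>k\<in>ds_block N t j. (\<integral>\<omega>. (norm (gv t k \<omega>))^2 \<partial>M))"
        using blk_sub by (intro Bochner_Integration.integral_sum sqi_sq_int gg_sqi) auto
      also have "\<dots> \<le> (\<Sum>k\<in>ds_block N t j. G^2)"
        using blk_sub by (intro sum_mono gg_sqi(2)) auto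
      also have "\<dots> = real N * G^2" using card_blk[OF j] by simp
      finally show ?thesis .
    qed
    have i1: "integrable M (\<lambda>\<omega>. (\<Sum>k\<in>ds_block N t j. (norm (gv t k \<omega>))^2))"
      using blk_sub by (intro Bochner_Integration.integrable_sum sqi_sq_int gg_sqi) auto
    have "(\<integral>\<omega>. B j \<omega> \<partial>M) = (eta t)^2 * (2 * ((1/real N) * (\<integral>\<omega>. (\<Sum>k\<in>ds_block N t j. (norm (gv t k \<omega>))^2) \<partial>M)) + 2 * (\<integral>\<omega>. (norm (gb t \<omega>))^2 \<partial>M))"
      unfolding B_def using i1 sqi_sq_int[OF gb_sqi[of t]] by simp
    also have "\<dots> \<le> (eta t)^2 * (2 * ((1/real N) * (real N * G^2)) + 2 * G^2)"
      using s gb_bound[of t] N_pos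
      by (intro mult_left_mono add_mono mult_left_mono) auto
    also have "\<dots> = 4 * (eta t)^2 * G^2" using N_pos by simp
    finally show ?thesis .
  qed
  have "(\<integral>\<omega>. cons (Suc t) \<omega> \<partial>M) \<le> (\<integral>\<omega>. (1/real (N^2)) * (\<Sum>j<N^2. B j \<omega>) \<partial>M)"
  proof (rule integral_mono)
    show "integrable M (cons (Suc t))" by (rule cons_int)
    show "integrable M (\<lambda>\<omega>. (1/real (N^2)) * (\<Sum>j<N^2. B j \<omega>))"
      by (intro integrable_mult_right Bochner_Integration.integrable_sum Bi)
    fix \<omega>
    show "cons (Suc t) \<omega> \<le> (1/real (N^2)) * (\<Sum>j<N^2. B j \<omega>)"
      unfolding cons_def by (intro mult_left_mono sum_mono pw) auto
  qed
  also have "\<dots> = (1/real (N^2)) * (\<Sum>j<N^2. (\<integral>\<omega>. B j \<omega> \<partial>M))"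
    using Bi by (simp add: Bochner_Integration.integral_sum)
  also have "\<dots> \<le> (1/real (N^2)) * (\<Sum>j<N^2. 4 * (eta t)^2 * G^2)"
    by (intro mult_left_mono sum_mono IB) auto
  also have "\<dots> = 4 * (eta t)^2 * G^2" using N2 by simp
  finally show ?thesis .
qed

end



lemma num_step:
  fixes s C K x :: real
  assumes s: "s \<ge> 2" and K: "K \<ge> 0" and C: "C \<ge> 32 * K" and x: "x \<le> C / s"
  shows "(1 - 2/s) * x + 20 * K / s^2 \<le> C / (s + 1)"
proof -
  have s0: "s > 0" using s by simp
  have c: "1 - 2/s \<ge> 0" using s by (simp add: field_simps)
  have "(1 - 2/s) * x \<le> (1 - 2/s) * (C / s)" by (rule mult_left_mono[OF x c])
  also have "(1 - 2/s) * (C / s) = C * (s - 2) / s^2" using s0 by (simp add: field_simps power2_eq_square)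
  finally have "(1 - 2/s) * x + 20 * K / s^2 \<le> (C * (s - 2) + 20 * K) / s^2"
    by (simp add: add_divide_distrib)
  also have "\<dots> \<le> C / (s + 1)"
  proof -
    have h: "20 * K * (s + 1) \<le> C * (s + 2)"
    proof -
      have "20 * K * (s + 1) \<le> 32 * K * (s + 2)" using K s by (simp add: algebra_simps)
      also have "\<dots> \<le> C * (s + 2)" using C s by (intro mult_right_mono) auto
      finally show ?thesis .
    qed
    have "(C * (s - 2) + 20 * K) * (s + 1) \<le> C * s^2"
      using h by (simp add: algebra_simps power2_eq_square)
    then show ?thesis using s0 by (simp add: field_simps)
  qed
  finally show ?thesis .
qed




context dsp begin

abbreviation "gam \<equiv> max (8 * (L / \<mu>)) 2"

lemma gam_eq: "gam = 8 * (L / \<mu>)"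
proof -
  have "L / \<mu> \<ge> 1" using mu_le_L mu_pos by simp
  then show ?thesis by simp
qed

lemma eta_eq: "eta t = 2 / (\<mu> * (gam + real t))"
  by (simp add: eta_def)

lemma a_bound:
  fixes B :: real
  assumes B: "B \<ge> 8 * G^2"
  shows "(\<integral>\<omega>. (norm (ab t \<omega> - wstar))^2 \<partial>M) \<le> (4 * B / \<mu>^2 + 8 * (L/\<mu>) * (norm (w0 - wstar))^2) / (gam + real t)"
proof (induction t)
  case 0
  have ab0: "ab 0 \<omega> = w0" for \<omega> using N_pos by (simp add: abar_def sum_constant_scaleR)
  have "(\<integral>\<omega>. (norm (ab 0 \<omega> - wstar))^2 \<partial>M) = (norm (w0 - wstar))^2"
    using prob by (simp add: ab0 prob_space.prob_space)
  also have "\<dots> = 8 * (L/\<mu>) * (norm (w0 - wstar))^2 / gam"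
    using gam_eq mu_pos L_pos by simp
  also have "\<dots> \<le> (4 * B / \<mu>^2 + 8 * (L/\<mu>) * (norm (w0 - wstar))^2) / gam"
  proof -
    have "0 \<le> 4 * B / \<mu>^2" using B by (simp add: order_trans[OF _ B])
    then show ?thesis by (intro divide_right_mono) auto
  qed
  finally show ?case by simp
next
  case (Suc t)
  define s where "s = gam + real t"
  define C where "C = 4 * B / \<mu>^2 + 8 * (L/\<mu>) * (norm (w0 - wstar))^2"
  define K where "K = G^2 / \<mu>^2"
  have s2: "s \<ge> 2" unfolding s_def by simp
  have eta: "eta t = 2 / (\<mu> * s)" by (simp add: eta_eq s_def)
  have mueta: "\<mu> * eta t = 2 / s" using mu_pos by (simp add: eta)
  have etaL: "eta t * L \<le> 1/4"
  proof -
    have "eta t * L = 2 * L / (\<mu> * s)" by (simp add: eta)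
    also have "\<dots> \<le> 2 * L / (\<mu> * gam)"
      using mu_pos L_pos s2 unfolding s_def by (intro divide_left_mono mult_left_mono) (auto simp: gam_eq)
    also have "\<dots> = 1/4" using mu_pos L_pos unfolding gam_eq by simp
    finally show ?thesis .
  qed
  have cons_t: "eta t * L * (\<integral>\<omega>. cons t \<omega> \<partial>M) \<le> 4 * (eta t)^2 * G^2"
  proof (cases t)
    case 0
    then show ?thesis by (simp add: cons_zero)
  next
    case (Suc t')
    have e': "eta t' \<le> 2 * eta t"
    proof -
      have st: "gam + real t' = s - 1" by (simp add: s_def Suc)
      have "eta t' = 2 / (\<mu> * (gam + real t'))" by (rule eta_eq)
      also have "\<dots> = 2 / (\<mu> * (s - 1))" by (simp only: st)
      also have "\<dots> \<le> 2 * (2 / (\<mu> * s))"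
        using mu_pos s2 by (simp add: field_simps)
      finally show ?thesis by (simp add: eta)
    qed
    have "eta t * L * (\<integral>\<omega>. cons t \<omega> \<partial>M) \<le> eta t * L * (4 * (eta t')^2 * G^2)"
      using cons_bound[of t'] eta_pos[of t] L_pos Suc by (intro mult_left_mono) auto
    also have "\<dots> \<le> eta t * L * (4 * (2 * eta t)^2 * G^2)"
    proof -
      have "(eta t')^2 \<le> (2 * eta t)^2" by (rule power_mono[OF e']) (use eta_pos[of t'] in simp)
      then have "4 * (eta t')^2 * G^2 \<le> 4 * (2 * eta t)^2 * G^2" by (intro mult_right_mono) auto
      then show ?thesis using eta_pos[of t] L_pos by (intro mult_left_mono) auto
    qed
    also have "\<dots> = (eta t * L) * (16 * (eta t)^2 * G^2)" by (simp add: power2_eq_square)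
    also have "\<dots> \<le> (1/4) * (16 * (eta t)^2 * G^2)"
      using etaL by (intro mult_right_mono) auto
    finally show ?thesis by (simp add: mult.commute mult.left_commute)
  qed
  have "(\<integral>\<omega>. (norm (ab (Suc t) \<omega> - wstar))^2 \<partial>M) \<le> (1 - 2/s) * (\<integral>\<omega>. (norm (ab t \<omega> - wstar))^2 \<partial>M) + 5 * (eta t)^2 * G^2"
    using a_step[of t] cons_t mueta by simp
  also have "5 * (eta t)^2 * G^2 = 20 * K / s^2"
    using mu_pos s2 by (simp add: eta K_def field_simps power2_eq_square)
  also have "(1 - 2/s) * (\<integral>\<omega>. (norm (ab t \<omega> - wstar))^2 \<partial>M) + 20 * K / s^2 \<le> C / (s + 1)"
  proof (rule num_step[OF s2])
    show "K \<ge> 0" by (simp add: K_def)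
    have "32 * K \<le> 4 * B / \<mu>^2" using B mu_pos by (simp add: K_def field_simps)
    also have "\<dots> \<le> C" using L_pos mu_pos by (simp add: C_def)
    finally show "32 * K \<le> C" .
    show "(\<integral>\<omega>. (norm (ab t \<omega> - wstar))^2 \<partial>M) \<le> C / s"
      using Suc.IH by (simp add: C_def s_def)
  qed
  finally show ?case by (simp add: C_def s_def add.assoc add.commute)
qed

lemma main:
  assumes m: "m < N^2"
  shows "(\<integral>\<^sup>+ \<omega>. ennreal (F ((1 / real N) *\<^sub>R (\<Sum>k\<in>ds_block N t m. w t k \<omega>)) - F wstar) \<partial>M)
     \<le> ennreal (2 * (L / \<mu>) / (gam + real t) * ((\<sigma>^2 / real N + 8 * G^2) / \<mu> + 2 * L * (norm (w0 - wstar))^2))"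
proof -
  define B where "B = \<sigma>^2 / real N + 8 * G^2"
  have B: "B \<ge> 8 * G^2" using N_pos by (simp add: B_def)
  have i: "integrable M (\<lambda>\<omega>. L / 2 * (norm (ab t \<omega> - wstar))^2)"
    using sqi_sq_int[OF X_sqi[of t]] by simp
  have "(\<integral>\<^sup>+ \<omega>. ennreal (F ((1 / real N) *\<^sub>R (\<Sum>k\<in>ds_block N t m. w t k \<omega>)) - F wstar) \<partial>M)
      = (\<integral>\<^sup>+ \<omega>. ennreal (F (ab t \<omega>) - F wstar) \<partial>M)"
    by (simp add: blk_avg[OF N_pos m])
  also have "\<dots> \<le> (\<integral>\<^sup>+ \<omega>. ennreal (L / 2 * (norm (ab t \<omega> - wstar))^2) \<partial>M)"
    by (intro nn_integral_mono ennreal_leI F_gap)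
  also have "\<dots> = ennreal (\<integral>\<omega>. L / 2 * (norm (ab t \<omega> - wstar))^2 \<partial>M)"
    by (rule nn_integral_eq_integral[OF i]) (use L_pos in simp)
  also have "\<dots> \<le> ennreal (L / 2 * ((4 * B / \<mu>^2 + 8 * (L/\<mu>) * (norm (w0 - wstar))^2) / (gam + real t)))"
  proof (rule ennreal_leI)
    show "(\<integral>\<omega>. L / 2 * (norm (ab t \<omega> - wstar))^2 \<partial>M) \<le> L / 2 * ((4 * B / \<mu>^2 + 8 * (L/\<mu>) * (norm (w0 - wstar))^2) / (gam + real t))"
      using mult_left_mono[OF a_bound[OF B, of t], of "L/2"] L_pos by simp
  qed
  also have "L / 2 * ((4 * B / \<mu>^2 + 8 * (L/\<mu>) * (norm (w0 - wstar))^2) / (gam + real t))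
     = 2 * (L / \<mu>) / (gam + real t) * (B / \<mu> + 2 * L * (norm (w0 - wstar))^2)"
  proof -
    have sp: "gam + real t > 0" by simp
    have "\<And>s. s > 0 \<Longrightarrow> L / 2 * ((4 * B / \<mu>^2 + 8 * (L/\<mu>) * (norm (w0 - wstar))^2) / s)
      = 2 * (L / \<mu>) / s * (B / \<mu> + 2 * L * (norm (w0 - wstar))^2)"
      using mu_pos by (simp add: field_simps power2_eq_square)
    then show ?thesis using sp by blast
  qed
  finally show ?thesis by (simp add: B_def)
qed

end


theorem theoremA4:
  fixes M :: "'p measure" and S :: "'b measure"
    and F :: "'a::euclidean_space \<Rightarrow> real" and F' :: "'a \<Rightarrow> 'a"
    and g :: "'a \<Rightarrow> 'b \<Rightarrow> 'a"
    and xi :: "nat \<Rightarrow> nat \<Rightarrow> 'p \<Rightarrow> 'b"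
    and N :: nat and w0 wstar :: 'a and L \<mu> \<sigma> G :: real
  assumes prob: "prob_space M"
    and N_pos: "N \<ge> 1"
    and xi_meas: "\<And>t m. m < N^2 \<Longrightarrow> xi t m \<in> measurable M S"
    and g_meas: "(\<lambda>(w, z). g w z) \<in> borel_measurable (borel \<Otimes>\<^sub>M S)"
    and grad: "\<And>w. (F has_derivative (\<lambda>h. F' w \<bullet> h)) (at w)"
    and smooth: "\<And>v w. F v \<le> F w + (v - w) \<bullet> F' w + L / 2 * (norm (v - w))^2"
    and mu_pos: "\<mu> > 0"
    and strconv: "\<And>v w. F v \<ge> F w + (v - w) \<bullet> F' w + \<mu> / 2 * (norm (v - w))^2"
    and minimizer: "\<And>w. F wstar \<le> F w"
    and cindep: "\<And>t. cond_indep_vars M (ds_filt M S N xi t) S {..<N^2} (xi t)"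
    and unbiased: "\<And>t m b. m < N^2 \<Longrightarrow> b \<in> Basis \<Longrightarrow>
       (let w = ds_iter N g (\<lambda>t. 2 / (\<mu> * (max (8 * (L / \<mu>)) 2 + real t))) w0 xi t m in
        AE \<omega> in M. real_cond_exp M (ds_filt M S N xi t) (\<lambda>\<omega>. g (w \<omega>) (xi t m \<omega>) \<bullet> b) \<omega>
                   = F' (w \<omega>) \<bullet> b)"
    and variance: "\<And>t m. m < N^2 \<Longrightarrow>
       (let w = ds_iter N g (\<lambda>t. 2 / (\<mu> * (max (8 * (L / \<mu>)) 2 + real t))) w0 xi t m in
        (\<integral>\<^sup>+ \<omega>. ennreal ((norm (g (w \<omega>) (xi t m \<omega>) - F' (w \<omega>)))^2) \<partial>M) \<le> ennreal (\<sigma>^2))"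
    and second_moment: "\<And>t m. m < N^2 \<Longrightarrow>
       (let w = ds_iter N g (\<lambda>t. 2 / (\<mu> * (max (8 * (L / \<mu>)) 2 + real t))) w0 xi t m in
        (\<integral>\<^sup>+ \<omega>. ennreal ((norm (g (w \<omega>) (xi t m \<omega>)))^2) \<partial>M) \<le> ennreal (G^2))"
  shows "\<forall>t m. m < N^2 \<longrightarrow>
     (let \<kappa> = L / \<mu>; \<gamma> = max (8 * \<kappa>) 2;
          w = ds_iter N g (\<lambda>t. 2 / (\<mu> * (\<gamma> + real t))) w0 xi;
          wbar = (\<lambda>\<omega>. (1 / real N) *\<^sub>R (\<Sum>k\<in>ds_block N t m. w t k \<omega>));
          B = \<sigma>^2 / real N + 8 * G^2
      in (\<integral>\<^sup>+ \<omega>. ennreal (F (wbar \<omega>) - F wstar) \<partial>M)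
           \<le> ennreal (2 * \<kappa> / (\<gamma> + real t) * (B / \<mu> + 2 * L * (norm (w0 - wstar))^2)))"
  proof -
  define eta where "eta = (\<lambda>t. 2 / (\<mu> * (max (8 * (L / \<mu>)) 2 + real t)))"
  have dl: "dsl F F' L \<mu> wstar"
    unfolding dsl_def using smooth mu_pos strconv minimizer by blast
  have "dsp F F' L \<mu> wstar M S g xi N w0 G eta"
    unfolding dsp_def dsp_axioms_def
  proof (intro conjI dl)
    show "prob_space M" by (rule prob)
    show "N \<ge> 1" by (rule N_pos)
    show "\<forall>t m. m < N^2 \<longrightarrow> xi t m \<in> measurable M S" using xi_meas by blast
    show "(\<lambda>(w, z). g w z) \<in> borel_measurable (borel \<Otimes>\<^sub>M S)" by (rule g_meas)
    show "eta = (\<lambda>t. 2 / (\<mu> * (max (8 * (L / \<mu>)) 2 + real t)))" by (rule eta_def)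
    show "\<forall>t m b. m < N^2 \<longrightarrow> b \<in> Basis \<longrightarrow>
       (AE \<omega> in M. real_cond_exp M (ds_filt M S N xi t) (\<lambda>\<omega>. g (ds_iter N g eta w0 xi t m \<omega>) (xi t m \<omega>) \<bullet> b) \<omega>
                   = F' (ds_iter N g eta w0 xi t m \<omega>) \<bullet> b)"
      using unbiased unfolding eta_def Let_def by blast
    show "\<forall>t m. m < N^2 \<longrightarrow>
        (\<integral>\<^sup>+ \<omega>. ennreal ((norm (g (ds_iter N g eta w0 xi t m \<omega>) (xi t m \<omega>)))^2) \<partial>M) \<le> ennreal (G^2)"
      using second_moment unfolding eta_def Let_def by blast
  qed
  then interpret dsp F F' L \<mu> wstar M S g xi N w0 G eta .
  show ?thesis
    unfolding Let_def using main unfolding eta_def by blast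
qed


end
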